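(* Let $G=\langle A\cup B\rangle$ be a stable and strongly orbitwise-abelian CS group with periodic rooted group $A$ such that either (i) $A$ has finite exponent, or (ii) the directed group $B$ has finite support. Assume that $B$ is abelian and periodic. If the atomic dynamical system $\Lambda_b$ on $\mathcal P(A)$ is eventually trivial for every $b\in B$, then $G$ is periodic.
   Context: Let $X$ be a nonempty set (possibly infinite) with distinguished letter $0$, $\dot X=X\setminus\{0\}$. $X^*$ is the free monoid on $X$ viewed as a rooted tree; $\mathrm{Aut}(X^* )$ is the group of root-fixing tree automorphisms acting on the right ($gh$ = first $g$ then $h$); sections $g|_u$ are defined by $(u\star v).g=u.g\star v.(g|_u)$; elements of $\mathrm{Sym}(X)$ are identified with rooted automorphisms $(x\star v).\rho=x.\rho\star v$; $\mathrm{St}(1)$ is the first layer stabiliser. A constant spinal (CS) group is $G=\langle A\cup B\rangle$ with $A\le\mathrm{Sym}(X)$ transitive (rooted group) and $B\le\mathrm{St}(1)$ (directed group) such that $b|_0=b$ for all $b\in B$ and the elements $b|_x$ ($b\in B$, $x\in\dot X$) lie in $A$ and generate $A$. $B$ has finite support if each $b\in B$ has $b|_x=\mathrm{id}$ for all but finitely many $x$. A group is periodic if every element has finite order. Notation: $\mathrm{st}_A(0)$ is the stabiliser of $0$; $\mathrm{orb}_c(0)$ the $\langle c\rangle$-orbit of $0$ and $\ell_c(0)$ its length. For $x\in X$ let $\mathrm{mp}_A(0,x)=\{c\in A: 0.c=x\}$ and fix $e_{0\mapsto x}\in\mathrm{mp}_A(0,x)$ with $e_{0\mapsto0}=1_A$.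 For $a\in A$, $x\in X$: $\mathfrak C(a,x)=\{cac^{-1}:c\in\mathrm{mp}_A(0,x)\}$ and $\mathfrak X(a,x)=\bigcup_{c\in\mathfrak C(a,x)}\mathrm{orb}_c(0)\setminus\{0\}$. For $b\in B$, $a\in A$ ($A$ periodic): $\lambda_b(a)=b|_{0.a}\,b|_{0.a^2}\cdots b|_{0.a^{\ell_a(0)-1}}$, $\lambda_b(a,x)=\lambda_b(e_{0\mapsto x}\,a\,e_{0\mapsto x}^{-1})$, and $\Lambda_b:\mathcal P(A)\to\mathcal P(A)$ is the atomic map $\Lambda_b(P)=\bigcup_{a\in P}\{\lambda_b(a,x):x\in X\}$. An atomic map $\Phi$ on $\mathcal P(A)$ is eventually trivial if for every $a\in A$ there is $n$ with $\Phi^m(\{a\})\subseteq\{1_A\}$ for all $m>n$. $G$ is stable if $\lambda_b(c')=\lambda_b(c'')$ for all $b\in B$, $a\in A$, $x\in X$ and $c',c''\in\mathfrak C(a,x)$. $G$ is strongly orbitwise-abelian if $\langle b|_y: y\in\mathfrak X(a,x),\ b\in B\rangle$ is abelian for all $a\in A$, $x\in X$. *)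

theory Defs
  imports Main
begin

text \<open>Automorphisms act on the right; we represent an automorphism g by the function
u \<mapsto> u.g. Hence the product gh ("first g then h") is the function h \<circ> g.\<close>

definition tree_aut :: "('x list \<Rightarrow> 'x list) \<Rightarrow> bool" where
  "tree_aut g \<longleftrightarrow> bij g \<and> (\<forall>u. length (g u) = length u)
     \<and> (\<forall>u v. take (length u) (g (u @ v)) = g u)"

definition sect :: "('x list \<Rightarrow> 'x list) \<Rightarrow> 'x list \<Rightarrow> ('x list \<Rightarrow> 'x list)" where
  "sect g u = (\<lambda>v. drop (length u) (g (u @ v)))"

definition rooted :: "('x \<Rightarrow> 'x) \<Rightarrow> ('x list \<Rightarrow> 'x list)" where
  "rooted \<rho> = (\<lambda>w. case w of [] \<Rightarrow> [] | x # v \<Rightarrow> \<rho> x # v)"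

definition perm_of :: "('x list \<Rightarrow> 'x list) \<Rightarrow> ('x \<Rightarrow> 'x)" where
  "perm_of g = (\<lambda>x. hd (g [x]))"

definition in_St1 :: "('x list \<Rightarrow> 'x list) \<Rightarrow> bool" where
  "in_St1 g \<longleftrightarrow> (\<forall>x. g [x] = [x])"

inductive_set gen_grp :: "('a \<Rightarrow> 'a) set \<Rightarrow> ('a \<Rightarrow> 'a) set" for S where
  gen_id: "id \<in> gen_grp S"
| gen_gen: "s \<in> S \<Longrightarrow> s \<in> gen_grp S"
| gen_inv: "s \<in> S \<Longrightarrow> inv s \<in> gen_grp S"
| gen_mult: "g \<in> gen_grp S \<Longrightarrow> h \<in> gen_grp S \<Longrightarrow> h \<circ> g \<in> gen_grp S"

definition perm_group :: "('a \<Rightarrow> 'a) set \<Rightarrow> bool" where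
  "perm_group S \<longleftrightarrow> (\<forall>f\<in>S. bij f) \<and> id \<in> S
     \<and> (\<forall>f\<in>S. \<forall>g\<in>S. g \<circ> f \<in> S) \<and> (\<forall>f\<in>S. inv f \<in> S)"

definition periodic :: "('a \<Rightarrow> 'a) set \<Rightarrow> bool" where
  "periodic S \<longleftrightarrow> (\<forall>g\<in>S. \<exists>n>0. g ^^ n = id)"

definition abelian :: "('a \<Rightarrow> 'a) set \<Rightarrow> bool" where
  "abelian S \<longleftrightarrow> (\<forall>f\<in>S. \<forall>g\<in>S. f \<circ> g = g \<circ> f)"

definition finite_exponent :: "('a \<Rightarrow> 'a) set \<Rightarrow> bool" where
  "finite_exponent S \<longleftrightarrow> (\<exists>n>0. \<forall>g\<in>S. g ^^ n = id)"

definition transitive_on :: "('x \<Rightarrow> 'x) set \<Rightarrow> bool" where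
  "transitive_on A \<longleftrightarrow> (\<forall>x y. \<exists>a\<in>A. a x = y)"

(* constant spinal group data: A rooted group, B directed group, x0 the letter 0 *)
definition CS_data :: "'x \<Rightarrow> ('x \<Rightarrow> 'x) set \<Rightarrow> ('x list \<Rightarrow> 'x list) set \<Rightarrow> bool" where
  "CS_data x0 A B \<longleftrightarrow>
     perm_group A \<and> transitive_on A \<and>
     perm_group B \<and> (\<forall>b\<in>B. tree_aut b \<and> in_St1 b) \<and>
     (\<forall>b\<in>B. sect b [x0] = b) \<and>
     (\<forall>b\<in>B. \<forall>x. x \<noteq> x0 \<longrightarrow> (\<exists>a\<in>A. sect b [x] = rooted a)) \<and>
     A = gen_grp {perm_of (sect b [x]) | b x. b \<in> B \<and> x \<noteq> x0}"

definition CS_group :: "('x \<Rightarrow> 'x) set \<Rightarrow> ('x list \<Rightarrow> 'x list) set \<Rightarrow> ('x list \<Rightarrow> 'x list) set" where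
  "CS_group A B = gen_grp (rooted ` A \<union> B)"

definition finite_support :: "'x \<Rightarrow> ('x list \<Rightarrow> 'x list) set \<Rightarrow> bool" where
  "finite_support x0 B \<longleftrightarrow> (\<forall>b\<in>B. finite {x. x \<noteq> x0 \<and> sect b [x] \<noteq> id})"

definition orb :: "('x \<Rightarrow> 'x) \<Rightarrow> 'x \<Rightarrow> 'x set" where
  "orb c x0 = {(c ^^ k) x0 | k. True}"

definition orb_len :: "('x \<Rightarrow> 'x) \<Rightarrow> 'x \<Rightarrow> nat" where
  "orb_len c x0 = (LEAST n. n > 0 \<and> (c ^^ n) x0 = x0)"

definition mp :: "('x \<Rightarrow> 'x) set \<Rightarrow> 'x \<Rightarrow> 'x \<Rightarrow> ('x \<Rightarrow> 'x) set" where
  "mp A x0 x = {c \<in> A. c x0 = x}"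

(* c a c^{-1} (first c, then a, then c^{-1}) as a function *)
definition conjg :: "('x \<Rightarrow> 'x) \<Rightarrow> ('x \<Rightarrow> 'x) \<Rightarrow> ('x \<Rightarrow> 'x)" where
  "conjg c a = inv c \<circ> a \<circ> c"

definition CC :: "('x \<Rightarrow> 'x) set \<Rightarrow> 'x \<Rightarrow> ('x \<Rightarrow> 'x) \<Rightarrow> 'x \<Rightarrow> ('x \<Rightarrow> 'x) set" where
  "CC A x0 a x = {conjg c a | c. c \<in> mp A x0 x}"

definition XX :: "('x \<Rightarrow> 'x) set \<Rightarrow> 'x \<Rightarrow> ('x \<Rightarrow> 'x) \<Rightarrow> 'x \<Rightarrow> 'x set" where
  "XX A x0 a x = (\<Union>c\<in>CC A x0 a x. orb c x0 - {x0})"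

(* product p1 p2 ... pm in right-action convention (first p1): function pm \<circ> ... \<circ> p1 *)
fun prod_right :: "('a \<Rightarrow> 'a) list \<Rightarrow> ('a \<Rightarrow> 'a)" where
  "prod_right [] = id"
| "prod_right (p # ps) = prod_right ps \<circ> p"

definition lam :: "'x \<Rightarrow> ('x list \<Rightarrow> 'x list) \<Rightarrow> ('x \<Rightarrow> 'x) \<Rightarrow> ('x \<Rightarrow> 'x)" where
  "lam x0 b a = prod_right (map (\<lambda>k. perm_of (sect b [(a ^^ k) x0])) [1..<orb_len a x0])"

definition lamx :: "'x \<Rightarrow> ('x \<Rightarrow> ('x \<Rightarrow> 'x)) \<Rightarrow> ('x list \<Rightarrow> 'x list) \<Rightarrow> ('x \<Rightarrow> 'x) \<Rightarrow> 'x \<Rightarrow> ('x \<Rightarrow> 'x)" where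
  "lamx x0 e b a x = lam x0 b (conjg (e x) a)"

definition Lam :: "'x \<Rightarrow> ('x \<Rightarrow> ('x \<Rightarrow> 'x)) \<Rightarrow> ('x list \<Rightarrow> 'x list) \<Rightarrow> ('x \<Rightarrow> 'x) set \<Rightarrow> ('x \<Rightarrow> 'x) set" where
  "Lam x0 e b P = (\<Union>a\<in>P. {lamx x0 e b a x | x. True})"

definition eventually_trivial :: "('x \<Rightarrow> 'x) set \<Rightarrow> (('x \<Rightarrow> 'x) set \<Rightarrow> ('x \<Rightarrow> 'x) set) \<Rightarrow> bool" where
  "eventually_trivial A \<Phi> \<longleftrightarrow> (\<forall>a\<in>A. \<exists>n. \<forall>m>n. (\<Phi> ^^ m) {a} \<subseteq> {id})"

definition stable :: "'x \<Rightarrow> ('x \<Rightarrow> 'x) set \<Rightarrow> ('x list \<Rightarrow> 'x list) set \<Rightarrow> bool" where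
  "stable x0 A B \<longleftrightarrow> (\<forall>b\<in>B. \<forall>a\<in>A. \<forall>x. \<forall>c1\<in>CC A x0 a x. \<forall>c2\<in>CC A x0 a x.
      lam x0 b c1 = lam x0 b c2)"

definition strongly_orbitwise_abelian :: "'x \<Rightarrow> ('x \<Rightarrow> 'x) set \<Rightarrow> ('x list \<Rightarrow> 'x list) set \<Rightarrow> bool" where
  "strongly_orbitwise_abelian x0 A B \<longleftrightarrow> (\<forall>a\<in>A. \<forall>x.
      abelian (gen_grp {sect b [y] | b y. b \<in> B \<and> y \<in> XX A x0 a x}))"

end

theory Submission imports Defs "HOL-Library.Multiset" begin

lemma rooted_nil[simp]: "rooted a [] = []" by (simp add: rooted_def)
lemma rooted_cons[simp]: "rooted a (z # v) = a z # v" by (simp add: rooted_def)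
lemma rooted_id[simp]: "rooted id = id" by (rule ext) (simp add: rooted_def split: list.splits)
lemma rooted_id'[simp]: "rooted (\<lambda>a. a) = (\<lambda>a. a)" using rooted_id unfolding id_def .
lemma rooted_comp: "rooted (f \<circ> g) = rooted f \<circ> rooted g"
  by (rule ext) (simp add: rooted_def split: list.splits)
lemma rooted_pow: "rooted f ^^ n = rooted (f ^^ n)"
proof (induction n)
  case 0 then show ?case by (rule ext) (simp add: rooted_def split: list.splits)
next
  case (Suc n) then show ?case by (metis funpow.simps(2) rooted_comp)
qed
lemma rooted_inj: "rooted f = rooted g \<Longrightarrow> f = g"
proof (rule ext)
  fix z assume "rooted f = rooted g"
  then have "rooted f [z] = rooted g [z]" by simp
  then show "f z = g z" by simp
qed
lemma perm_of_rooted[simp]: "perm_of (rooted a) = a" by (rule ext) (simp add: perm_of_def)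
lemma perm_of_id[simp]: "perm_of id = id" by (rule ext) (simp add: perm_of_def)


lemma prod_right_append: "prod_right (xs @ ys) = prod_right ys \<circ> prod_right xs"
  by (induction xs) auto
lemma prod_right_concat: "prod_right (concat xss) = prod_right (map prod_right xss)"
  by (induction xss) (auto simp: prod_right_append)

lemma prod_right_commute_one:
  assumes "\<forall>y\<in>set ys. a \<circ> y = y \<circ> a"
  shows "a \<circ> prod_right ys = prod_right ys \<circ> a"
  using assms by (induction ys) (auto simp: comp_assoc[symmetric], metis comp_assoc)

lemma prod_right_mset:
  assumes "\<forall>x\<in>S. \<forall>y\<in>S. x \<circ> y = y \<circ> x" "set xs \<subseteq> S" "mset xs = mset ys"
  shows "prod_right xs = prod_right ys"
  using assms(2,3)
proof (induction xs arbitrary: ys)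
  case Nil then show ?case by simp
next
  case (Cons a xs)
  then have "a \<in> set ys" by (metis list.set_intros(1) set_mset_mset)
  then obtain ys1 ys2 where ys: "ys = ys1 @ a # ys2" by (meson split_list)
  have sy: "set ys = set (a # xs)" using Cons.prems(2) by (metis set_mset_mset)
  have "set ys1 \<subseteq> S" using sy ys Cons.prems(1) by auto
  moreover have "a \<in> S" using Cons.prems(1) by auto
  ultimately have comm: "a \<circ> prod_right ys1 = prod_right ys1 \<circ> a"
    using assms(1) by (intro prod_right_commute_one) auto
  have "mset xs = mset (ys1 @ ys2)" using Cons.prems(2) ys by simp
  then have IH: "prod_right xs = prod_right (ys1 @ ys2)" using Cons by auto
  have "prod_right ys = prod_right ys2 \<circ> a \<circ> prod_right ys1"
    by (simp add: ys prod_right_append comp_assoc)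
  also have "\<dots> = prod_right ys2 \<circ> prod_right ys1 \<circ> a" using comm by (simp add: comp_assoc)
  also have "\<dots> = prod_right (a # xs)" using IH by (simp add: prod_right_append)
  finally show ?case by simp
qed


definition alpha :: "('x list \<Rightarrow> 'x list) \<Rightarrow> 'x \<Rightarrow> ('x \<Rightarrow> 'x)" where
  "alpha b y = perm_of (sect b [y])"

type_synonym 'x lett = "('x \<Rightarrow> 'x) + ('x list \<Rightarrow> 'x list)"

fun ev :: "'x lett list \<Rightarrow> 'x list \<Rightarrow> 'x list" where
  "ev [] = id"
| "ev (Inl a # w) = ev w \<circ> rooted a"
| "ev (Inr b # w) = ev w \<circ> b"

fun rp :: "'x lett list \<Rightarrow> 'x \<Rightarrow> 'x" where
  "rp [] = id"
| "rp (Inl a # w) = rp w \<circ> a"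
| "rp (Inr b # w) = rp w"

fun secw :: "'x \<Rightarrow> 'x lett list \<Rightarrow> 'x \<Rightarrow> 'x lett list" where
  "secw x0 [] z = []"
| "secw x0 (Inl a # w) z = secw x0 w (a z)"
| "secw x0 (Inr b # w) z = (if z = x0 then Inr b else Inl (alpha b z)) # secw x0 w z"

fun pw :: "'x lett list \<Rightarrow> (('x list \<Rightarrow> 'x list) \<times> ('x \<Rightarrow> 'x)) list" where
  "pw [] = []"
| "pw (Inl a # w) = map (\<lambda>(b, d). (b, d \<circ> a)) (pw w)"
| "pw (Inr b # w) = (b, id) # pw w"

fun al :: "'x lett list \<Rightarrow> ('x \<Rightarrow> 'x) list" where
  "al [] = []"
| "al (Inl a # w) = a # al w"
| "al (Inr b # w) = al w"

fun bl :: "'x lett list \<Rightarrow> ('x list \<Rightarrow> 'x list) list" where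
  "bl [] = []"
| "bl (Inl a # w) = bl w"
| "bl (Inr b # w) = b # bl w"

definition wpow :: "'a list \<Rightarrow> nat \<Rightarrow> 'a list" where
  "wpow w k = concat (replicate k w)"

definition Fl :: "'x \<Rightarrow> 'x \<Rightarrow> ('x list \<Rightarrow> 'x list) \<times> ('x \<Rightarrow> 'x) \<Rightarrow> 'x lett" where
  "Fl x0 y p = (if snd p y = x0 then Inr (fst p) else Inl (alpha (fst p) (snd p y)))"

lemma ev_append: "ev (u @ v) = ev v \<circ> ev u"
  apply (induction u) apply simp subgoal for l u by (cases l) (auto simp: comp_assoc) done
lemma rp_append: "rp (u @ v) = rp v \<circ> rp u"
  apply (induction u) apply simp subgoal for l u by (cases l) (auto simp: comp_assoc) done
lemma secw_append: "secw x0 (u @ v) z = secw x0 u z @ secw x0 v (rp u z)"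
  apply (induction u arbitrary: z) apply simp subgoal for l u z by (cases l) auto done
lemma bl_append: "bl (u @ v) = bl u @ bl v"
  by (induction u rule: bl.induct) auto
lemma al_append: "al (u @ v) = al u @ al v"
  by (induction u rule: al.induct) auto
lemma rp_al: "rp w = prod_right (al w)"
  apply (induction w) apply simp subgoal for l u by (cases l) auto done
lemma bl_pw: "bl w = map fst (pw w)"
  by (induction w rule: pw.induct) (auto simp: case_prod_beta)
lemma secw_pw: "secw x0 w z = map (Fl x0 z) (pw w)"
  by (induction w arbitrary: z rule: pw.induct) (auto simp: Fl_def case_prod_beta)

lemma wpow_Suc: "wpow w (Suc k) = w @ wpow w k" by (simp add: wpow_def)
lemma wpow_0[simp]: "wpow w 0 = []" by (simp add: wpow_def)
lemma wpow_1: "wpow w (Suc 0) = w" by (simp add: wpow_def)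
lemma wpow_mult: "wpow w (l * q) = wpow (wpow w l) q"
proof (induction q)
  case 0 then show ?case by simp
next
  case (Suc q)
  have "wpow w (l * Suc q) = wpow w l @ wpow w (l * q)"
    by (simp add: wpow_def replicate_add)
  then show ?case using Suc by (simp add: wpow_Suc)
qed

lemma ev_wpow: "ev (wpow w k) = ev w ^^ k"
  by (induction k) (simp_all add: wpow_Suc ev_append funpow_Suc_right funpow_swap1)
lemma rp_wpow: "rp (wpow w k) = rp w ^^ k"
  by (induction k) (simp_all add: wpow_Suc rp_append funpow_Suc_right funpow_swap1)

lemma secw_wpow_fix:
  assumes "rp v z = z" shows "secw x0 (wpow v q) z = wpow (secw x0 v z) q"
  by (induction q) (simp_all add: wpow_Suc secw_append assms)

lemma secw_wpow:
  "secw x0 (wpow w k) z = concat (map (\<lambda>j. secw x0 w ((rp w ^^ j) z)) [0..<k])"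
proof (induction k arbitrary: z)
  case 0 then show ?case by simp
next
  case (Suc k)
  have "secw x0 (wpow w (Suc k)) z = secw x0 w z @ secw x0 (wpow w k) (rp w z)"
    by (simp add: wpow_Suc secw_append)
  also have "\<dots> = secw x0 w z @ concat (map (\<lambda>j. secw x0 w ((rp w ^^ j) (rp w z))) [0..<k])"
    using Suc by simp
  also have "\<dots> = concat (map (\<lambda>j. secw x0 w ((rp w ^^ j) z)) [0..<Suc k])"
    by (simp add: upt_conv_Cons map_Suc_upt[symmetric] comp_def funpow_swap1 del: upt_Suc)
  finally show ?case .
qed



lemma funpow_fix_mult: "(f ^^ l) z = z \<Longrightarrow> (f ^^ (l * q)) z = z"
  by (induction q) (simp_all add: funpow_add)

lemma powmod: assumes "(f ^^ l) z = z" shows "(f ^^ a) z = (f ^^ (a mod l)) z"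
proof -
  have "a = a mod l + l * (a div l)" by simp
  then have "(f ^^ a) z = (f ^^ (a mod l)) ((f ^^ (l * (a div l))) z)"
    by (metis funpow_add comp_apply)
  then show ?thesis using funpow_fix_mult[OF assms] by simp
qed

lemma orb_len_props:
  assumes "(f ^^ m) z = z" "m > 0"
  shows "orb_len f z > 0" "(f ^^ orb_len f z) z = z" "orb_len f z \<le> m"
    "\<And>k. 0 < k \<Longrightarrow> k < orb_len f z \<Longrightarrow> (f ^^ k) z \<noteq> z"
proof -
  have ex: "0 < m \<and> (f ^^ m) z = z" using assms by simp
  show "orb_len f z > 0" "(f ^^ orb_len f z) z = z" unfolding orb_len_def
    using LeastI[of "\<lambda>n. 0 < n \<and> (f ^^ n) z = z", OF ex] by auto
  show "orb_len f z \<le> m" unfolding orb_len_def using Least_le[of "\<lambda>n. 0 < n \<and> (f ^^ n) z = z", OF ex] .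
  fix k assume "0 < k" "k < orb_len f z"
  then show "(f ^^ k) z \<noteq> z" unfolding orb_len_def using not_less_Least by blast
qed

lemma orb_len_dvd:
  assumes "(f ^^ m) z = z" "m > 0" shows "orb_len f z dvd m"
proof -
  let ?l = "orb_len f z"
  note P = orb_len_props[OF assms]
  have "(f ^^ (m mod ?l)) z = z" using powmod[OF P(2), of m] assms(1) by simp
  moreover have "m mod ?l < ?l" using P(1) by simp
  ultimately have "m mod ?l = 0" using P(4) by (cases "m mod ?l = 0") auto
  then show ?thesis by (simp add: mod_eq_0_iff_dvd)
qed

lemma orb_distinct:
  assumes "inj f" "i < orb_len f z" "j < orb_len f z" "(f ^^ i) z = (f ^^ j) z"
    "\<And>k. 0 < k \<Longrightarrow> k < orb_len f z \<Longrightarrow> (f ^^ k) z \<noteq> z"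
  shows "i = j"
proof (rule ccontr)
  assume ne: "i \<noteq> j"
  have injp: "\<And>n. inj (f ^^ n)" using assms(1) by (simp add: inj_fn)
  { fix i j assume ij: "i < j" "j < orb_len f z" "(f ^^ i) z = (f ^^ j) z"
    have "(f ^^ j) z = (f ^^ i) ((f ^^ (j - i)) z)" using ij by (metis funpow_add comp_apply le_add_diff_inverse less_imp_le)
    then have "(f ^^ (j - i)) z = z" using ij(3) injp by (metis injD)
    moreover have "0 < j - i" "j - i < orb_len f z" using ij by auto
    ultimately have False using assms(5) by blast }
  then show False using ne assms(2,3,4) by (metis linorder_neqE_nat)
qed

lemma conj_pow:
  assumes "bij c" shows "(inv c \<circ> p \<circ> c) ^^ k = inv c \<circ> p ^^ k \<circ> c"
proof (induction k)
  case 0 then show ?case using assms by (simp add: bij_is_inj fun_eq_iff)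
next
  case (Suc k)
  have "c (inv c y) = y" for y using assms by (simp add: bij_is_surj surj_f_inv_f)
  then show ?case using Suc by (simp add: fun_eq_iff)
qed

lemma conj_orb_len:
  assumes "bij c" shows "orb_len (inv c \<circ> p \<circ> c) (inv c y) = orb_len p y"
proof -
  have "((inv c \<circ> p \<circ> c) ^^ n) (inv c y) = inv c y \<longleftrightarrow> (p ^^ n) y = y" for n
  proof -
    have "((inv c \<circ> p \<circ> c) ^^ n) (inv c y) = inv c ((p ^^ n) y)"
      using assms by (simp add: conj_pow bij_is_surj surj_f_inv_f)
    then show ?thesis using assms by (metis bij_inv_eq_iff)
  qed
  then show ?thesis unfolding orb_len_def by simp
qed


lemma mset_concat_nth: "mset (concat (map L xs)) = (\<Sum>i<length xs. mset (L (xs ! i)))"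
proof (induction xs)
  case Nil then show ?case by simp
next
  case (Cons x xs)
  show ?case using Cons by (simp add: sum.lessThan_Suc_shift del: sum.lessThan_Suc)
qed

lemma mset_concat_upt: "mset (concat (map L [0..<l])) = (\<Sum>j<l. mset (L j))"
  by (simp add: mset_concat_nth)

lemma bl_concat: "bl (concat xss) = concat (map bl xss)"
  by (induction xss) (simp_all add: bl_append)
lemma al_concat: "al (concat xss) = concat (map al xss)"
  by (induction xss) (simp_all add: al_append)
lemma bl_map_Fl: "bl (map (Fl x0 y) P) = concat (map (\<lambda>p. if snd p y = x0 then [fst p] else []) P)"
  by (induction P) (auto simp: Fl_def)
lemma al_map_Fl: "al (map (Fl x0 y) P) = concat (map (\<lambda>p. if snd p y = x0 then [] else [alpha (fst p) (snd p y)]) P)"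
  by (induction P) (auto simp: Fl_def)

lemma prod_right_ids: "prod_right (map (\<lambda>_. id) xs) = id"
  by (induction xs) auto

lemma prod_right_split:
  assumes "\<forall>x\<in>S. \<forall>y\<in>S. x \<circ> y = y \<circ> x" "\<forall>k\<in>set ks. g k \<in> S \<and> h k \<in> S"
  shows "prod_right (map (\<lambda>k. g k \<circ> h k) ks) = prod_right (map g ks) \<circ> prod_right (map h ks)"
  using assms(2)
proof (induction ks)
  case Nil then show ?case by simp
next
  case (Cons k ks)
  have "g k \<circ> prod_right (map h ks) = prod_right (map h ks) \<circ> g k"
    using Cons.prems assms(1) by (intro prod_right_commute_one) auto
  then have c: "\<And>x. prod_right (map h ks) (g k x) = g k (prod_right (map h ks) x)"
    by (metis comp_apply)
  have IH: "prod_right (map (\<lambda>k. g k \<circ> h k) ks) = prod_right (map g ks) \<circ> prod_right (map h ks)"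
    using Cons.prems by (intro Cons.IH) auto
  show ?case by (simp only: list.map prod_right.simps IH) (simp add: fun_eq_iff c)
qed


lemma mset_map_upt: "mset (map f [m..<n]) = (\<Sum>k\<in>{m..<n}. {#f k#})"
  by (induction n) (auto simp: add.commute)

lemma modarith1: assumes "J < (l::nat)" "1 \<le> k" "k < l"
  shows "((k + J) mod l + l - J) mod l = k" "(k + J) mod l < l" "(k + J) mod l \<noteq> J"
proof -
  show "(k + J) mod l < l" using assms by simp
  show "(k + J) mod l \<noteq> J"
  proof
    assume "(k + J) mod l = J"
    then show False using assms
      by (cases "k + J < l") (auto simp: mod_if le_mod_geq split: if_splits)
  qed
  show "((k + J) mod l + l - J) mod l = k"
    using assms by (cases "k + J < l") (auto simp: mod_if le_mod_geq)
qed

lemma modarith2: assumes "J < (l::nat)" "j < l" "j \<noteq> J"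
  shows "((j + l - J) mod l + J) mod l = j" "1 \<le> (j + l - J) mod l" "(j + l - J) mod l < l"
proof -
  show "(j + l - J) mod l < l" using assms by simp
  show "((j + l - J) mod l + J) mod l = j"
    using assms by (cases "j < J") (auto simp: mod_if le_mod_geq)
  show "1 \<le> (j + l - J) mod l"
    using assms by (cases "j < J") (auto simp: mod_if le_mod_geq)
qed

lemma modarith3: assumes "J < (l::nat)" "1 \<le> k" "k < l"
  shows "(l - J + (k + J) mod l) mod l = k"
  using assms by (cases "k + J < l") (auto simp: mod_if le_mod_geq)


lemma ev_allB: "al u = [] \<Longrightarrow> ev u = prod_right (bl u)"
  apply (induction u) apply simp subgoal for l u by (cases l) auto done
lemma ev_allA: "bl u = [] \<Longrightarrow> ev u = rooted (rp u)"
  apply (induction u) apply simp subgoal for l u by (cases l) (auto simp: rooted_comp) done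

lemma funpow_cons:
  assumes "\<And>z v. g (z # v) = z # G z v"
  shows "(g ^^ N) (z # v) = z # (G z ^^ N) v"
  by (induction N arbitrary: v) (simp_all add: assms)

lemma funpow_dvd_id: "f ^^ r = id \<Longrightarrow> r dvd N \<Longrightarrow> f ^^ N = id"
proof -
  assume a: "f ^^ r = id" "r dvd N"
  then obtain k where k: "N = r * k" by (auto simp: dvd_def)
  have idk: "(id::'a \<Rightarrow> 'a) ^^ k = id" for k by (induction k) simp_all
  have "f ^^ N = (f ^^ r) ^^ k" by (simp add: k funpow_mult)
  then show ?thesis using a(1) idk by simp
qed

lemma set_al_secw:
  assumes "x \<in> set (al (secw x0 (wpow w l) z))"
  shows "\<exists>q\<in>set (pw w). \<exists>j<l. snd q ((rp w ^^ j) z) \<noteq> x0 \<and> x = alpha (fst q) (snd q ((rp w ^^ j) z))"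
  using assms unfolding secw_wpow by (auto simp: secw_pw al_concat al_map_Fl split: if_splits) (metis fst_conv snd_conv)

lemma set_bl_secw:
  assumes "x \<in> set (bl (secw x0 (wpow w l) z))"
  shows "\<exists>q\<in>set (pw w). \<exists>j<l. snd q ((rp w ^^ j) z) = x0"
  using assms unfolding secw_wpow by (auto simp: secw_pw bl_concat bl_map_Fl split: if_splits) (metis snd_conv)

lemma al_secw_allhit: "\<forall>q\<in>set (pw w). snd q z = x0 \<Longrightarrow> al (secw x0 w z) = []"
  by (simp add: secw_pw al_map_Fl)


lemma sum_le1_eq:
  assumes "finite I" "\<forall>i\<in>I. f i \<le> (1::nat)" "sum f I = card I" "i \<in> I"
  shows "f i = 1"
proof (rule ccontr)
  assume ne: "f i \<noteq> 1"
  have "f i \<le> 1" using assms(2,4) by blast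
  then have f0: "f i = 0" using ne by arith
  have "sum f I = f i + sum f (I - {i})" by (rule sum.remove[OF assms(1,4)])
  also have "\<dots> \<le> 0 + sum (\<lambda>_. 1) (I - {i})" using f0 assms(2) by (intro add_mono sum_mono) auto
  also have "\<dots> = card I - 1" using assms(1,4) by simp
  also have "\<dots> < card I"
  proof -
    have "card I > 0" using assms(1,4) card_gt_0_iff by blast
    then show ?thesis by arith
  qed
  finally show False using assms(3) by simp
qed

lemma prod_right_all_id: "set xs \<subseteq> {id} \<Longrightarrow> prod_right xs = id"
  by (induction xs) auto

lemma map_nth_fst: "map (\<lambda>i. f (P ! i)) [0..<length P] = map f P"
  by (rule nth_equalityI) simp_all

locale CSL =
  fixes x0 :: 'x and A :: "('x \<Rightarrow> 'x) set" and B :: "('x list \<Rightarrow> 'x list) set"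
    and e :: "'x \<Rightarrow> ('x \<Rightarrow> 'x)"
  assumes CS: "CS_data x0 A B"
    and e_mp: "\<forall>x. e x \<in> mp A x0 x"
    and stab: "stable x0 A B"
    and soa: "strongly_orbitwise_abelian x0 A B"
    and A_per: "periodic A"
    and fin: "finite_exponent A \<or> finite_support x0 B"
    and B_ab: "abelian B"
    and B_per: "periodic B"
    and evt: "\<forall>b\<in>B. eventually_trivial A (Lam x0 e b)"
begin

lemma A_grp: "perm_group A" and B_grp: "perm_group B" and A_trans: "transitive_on A"
  using CS unfolding CS_data_def by blast+

lemma A_bij: "a \<in> A \<Longrightarrow> bij a" using A_grp by (auto simp: perm_group_def)
lemma A_id: "id \<in> A" using A_grp by (auto simp: perm_group_def)
lemma A_comp: "f \<in> A \<Longrightarrow> g \<in> A \<Longrightarrow> g \<circ> f \<in> A" using A_grp by (auto simp: perm_group_def)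
lemma A_inv: "a \<in> A \<Longrightarrow> inv a \<in> A" using A_grp by (auto simp: perm_group_def)
lemma A_pow: "a \<in> A \<Longrightarrow> a ^^ n \<in> A"
  by (induction n) (simp_all add: A_id A_comp)
lemma B_bij: "b \<in> B \<Longrightarrow> bij b" using B_grp by (auto simp: perm_group_def)
lemma B_id: "id \<in> B" using B_grp by (auto simp: perm_group_def)
lemma B_comp: "f \<in> B \<Longrightarrow> g \<in> B \<Longrightarrow> g \<circ> f \<in> B" using B_grp by (auto simp: perm_group_def)
lemma B_inv: "b \<in> B \<Longrightarrow> inv b \<in> B" using B_grp by (auto simp: perm_group_def)
lemma B_tree: "b \<in> B \<Longrightarrow> tree_aut b" and B_St1: "b \<in> B \<Longrightarrow> in_St1 b"
  using CS unfolding CS_data_def by blast+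
lemma sect_x0: "b \<in> B \<Longrightarrow> sect b [x0] = b" using CS unfolding CS_data_def by blast

lemma sect_other: assumes "b \<in> B" "y \<noteq> x0"
  shows "sect b [y] = rooted (alpha b y)" "alpha b y \<in> A"
proof -
  obtain a where "a \<in> A" "sect b [y] = rooted a" using CS assms unfolding CS_data_def by blast
  then show "sect b [y] = rooted (alpha b y)" "alpha b y \<in> A" by (auto simp: alpha_def)
qed

lemma B_nil: assumes "b \<in> B" shows "b [] = []"
proof -
  have "\<forall>u. length (b u) = length u" using B_tree[OF assms] unfolding tree_aut_def by blast
  then have "length (b []) = 0" by simp
  then show ?thesis by simp
qed

lemma B_cons: assumes "b \<in> B" shows "b (z # v) = z # sect b [z] v"
proof -
  have t: "tree_aut b" and s: "in_St1 b" using assms B_tree B_St1 by auto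
  have "\<forall>u v. take (length u) (b (u @ v)) = b u" using t unfolding tree_aut_def by blast
  from this[rule_format, of "[z]" v] have "take 1 (b ([z] @ v)) = b [z]" by simp
  also have "\<dots> = [z]" using s by (simp add: in_St1_def)
  finally have tk: "take 1 (b (z # v)) = [z]" by simp
  have "b (z # v) = take 1 (b (z # v)) @ drop 1 (b (z # v))" by simp
  also have "\<dots> = z # sect b [z] v" using tk by (simp add: sect_def)
  finally show ?thesis .
qed

lemma alpha_id: "alpha id y = id"
  by (rule ext) (simp add: alpha_def sect_def perm_of_def)

lemma sect_comp_B: assumes "f \<in> B" "b \<in> B" shows "sect (f \<circ> b) [y] = sect f [y] \<circ> sect b [y]"
proof (rule ext)
  fix v
  have "sect (f \<circ> b) [y] v = drop 1 (f (b (y # v)))" by (simp add: sect_def)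
  also have "\<dots> = drop 1 (f (y # sect b [y] v))" using B_cons[OF assms(2)] by simp
  also have "\<dots> = sect f [y] (sect b [y] v)" using B_cons[OF assms(1)] by simp
  finally show "sect (f \<circ> b) [y] v = (sect f [y] \<circ> sect b [y]) v" by simp
qed

lemma alpha_comp: assumes "f \<in> B" "b \<in> B" "y \<noteq> x0"
  shows "alpha (f \<circ> b) y = alpha f y \<circ> alpha b y"
proof -
  have "sect (f \<circ> b) [y] = rooted (alpha f y \<circ> alpha b y)"
    by (simp only: sect_comp_B[OF assms(1,2)] sect_other(1)[OF assms(1,3)] sect_other(1)[OF assms(2,3)] rooted_comp)
  then show ?thesis by (simp add: alpha_def)
qed

lemma prod_right_B: "set bs \<subseteq> B \<Longrightarrow> prod_right bs \<in> B"
  by (induction bs) (auto simp: B_id B_comp)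
lemma prod_right_A: "set bs \<subseteq> A \<Longrightarrow> prod_right bs \<in> A"
  by (induction bs) (auto simp: A_id A_comp)

definition valid :: "'x lett list \<Rightarrow> bool" where
  "valid w \<longleftrightarrow> (\<forall>l\<in>set w. case l of Inl a \<Rightarrow> a \<in> A | Inr b \<Rightarrow> b \<in> B)"

lemma valid_simps[simp]: "valid [] = True" "valid (Inl a # w) = (a \<in> A \<and> valid w)"
  "valid (Inr b # w) = (b \<in> B \<and> valid w)" "valid (u @ v) = (valid u \<and> valid v)"
  by (auto simp: valid_def)

lemma valid_wpow: "valid w \<Longrightarrow> valid (wpow w k)"
  by (induction k) (auto simp: wpow_Suc)

lemma valid_secw: "valid w \<Longrightarrow> valid (secw x0 w z)"
  apply (induction w arbitrary: z) apply simp subgoal for l u z by (cases l) (auto simp: sect_other) done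

lemma al_A: "valid w \<Longrightarrow> set (al w) \<subseteq> A"
  apply (induction w) apply simp subgoal for l u by (cases l) auto done
lemma bl_B: "valid w \<Longrightarrow> set (bl w) \<subseteq> B"
  apply (induction w) apply simp subgoal for l u by (cases l) auto done
lemma rp_A: "valid w \<Longrightarrow> rp w \<in> A"
  by (simp add: rp_al prod_right_A al_A)
lemma pw_A: "valid w \<Longrightarrow> p \<in> set (pw w) \<Longrightarrow> fst p \<in> B \<and> snd p \<in> A"
proof (induction w arbitrary: p)
  case Nil then show ?case by simp
next
  case (Cons l u)
  show ?case
  proof (cases l)
    case (Inl a)
    then obtain b d where bd: "(b, d) \<in> set (pw u)" "p = (b, d \<circ> a)" using Cons.prems by auto
    have va: "a \<in> A" "valid u" using Inl Cons.prems by auto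
    have "b \<in> B \<and> d \<in> A" using Cons.IH[OF va(2) bd(1)] by simp
    moreover have "d \<circ> a \<in> A" using A_comp[OF va(1)] calculation by blast
    ultimately show ?thesis unfolding bd(2) fst_conv snd_conv by blast
  next
    case (Inr b)
    then have "p = (b, id) \<or> p \<in> set (pw u)" using Cons.prems by auto
    moreover have "b \<in> B" "valid u" using Inr Cons.prems by auto
    ultimately show ?thesis using Cons.IH A_id by (metis fst_conv snd_conv)
  qed
qed

lemma ev_nil: "valid w \<Longrightarrow> ev w [] = []"
  apply (induction w) apply simp subgoal for l u by (cases l) (auto simp: B_nil) done

lemma ev_cons: "valid w \<Longrightarrow> ev w (z # v) = rp w z # ev (secw x0 w z) v"
proof (induction w arbitrary: z v)
  case Nil then show ?case by simp
next
  case (Cons l w)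
  show ?case
  proof (cases l)
    case (Inl a) then show ?thesis using Cons by auto
  next
    case (Inr b)
    then have b: "b \<in> B" and vw: "valid w" using Cons.prems by auto
    have "ev (l # w) (z # v) = ev w (z # sect b [z] v)" using Inr b by (simp add: B_cons)
    also have "\<dots> = rp w z # ev (secw x0 w z) (sect b [z] v)" using Cons.IH vw by simp
    also have "ev (secw x0 w z) (sect b [z] v) = ev (secw x0 (l # w) z) v"
      using Inr b by (auto simp: sect_x0 sect_other)
    finally show ?thesis using Inr by simp
  qed
qed


definition CommS :: "('x \<Rightarrow> 'x) \<Rightarrow> 'x \<Rightarrow> ('x \<Rightarrow> 'x) set" where
  "CommS p z = {alpha b y | b y. b \<in> B \<and> y \<in> XX A x0 p z}"

lemma XX_ne: "y \<in> XX A x0 p z \<Longrightarrow> y \<noteq> x0" by (auto simp: XX_def)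

lemma comm_S: assumes "p \<in> A" "f \<in> CommS p z" "g \<in> CommS p z" shows "f \<circ> g = g \<circ> f"
proof -
  let ?G = "{sect b [y] | b y. b \<in> B \<and> y \<in> XX A x0 p z}"
  have ab: "abelian (gen_grp ?G)" using soa assms(1) unfolding strongly_orbitwise_abelian_def by blast
  obtain b y where f: "f = alpha b y" "b \<in> B" "y \<in> XX A x0 p z" using assms(2) by (auto simp: CommS_def)
  obtain b' y' where g: "g = alpha b' y'" "b' \<in> B" "y' \<in> XX A x0 p z" using assms(3) by (auto simp: CommS_def)
  have "sect b [y] \<in> ?G" using f by blast
  then have "sect b [y] \<in> gen_grp ?G" by (rule gen_gen)
  moreover have "sect b [y] = rooted f" using f sect_other(1)[OF f(2) XX_ne[OF f(3)]] by simp
  ultimately have rf: "rooted f \<in> gen_grp ?G" by simp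
  have "sect b' [y'] \<in> ?G" using g by blast
  then have "sect b' [y'] \<in> gen_grp ?G" by (rule gen_gen)
  moreover have "sect b' [y'] = rooted g" using g sect_other(1)[OF g(2) XX_ne[OF g(3)]] by simp
  ultimately have rg: "rooted g \<in> gen_grp ?G" by simp
  have "rooted f \<circ> rooted g = rooted g \<circ> rooted f" using ab rf rg unfolding abelian_def by blast
  then have "rooted (f \<circ> g) = rooted (g \<circ> f)" by (simp add: rooted_comp)
  then show ?thesis by (rule rooted_inj)
qed

lemma comm_S': "p \<in> A \<Longrightarrow> \<forall>f\<in>CommS p z. \<forall>g\<in>CommS p z. f \<circ> g = g \<circ> f"
  using comm_S by blast

lemma orb_in_XX: assumes "a \<in> CC A x0 p z" "0 < k" "k < orb_len a x0"
  shows "(a ^^ k) x0 \<in> XX A x0 p z"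
proof -
  have "(a ^^ k) x0 \<noteq> x0" using assms(2,3) unfolding orb_len_def using not_less_Least by blast
  moreover have "(a ^^ k) x0 \<in> orb a x0" by (auto simp: orb_def)
  ultimately show ?thesis using assms(1) by (auto simp: XX_def)
qed

lemma lam_alpha: "lam x0 b a = prod_right (map (\<lambda>k. alpha b ((a ^^ k) x0)) [1..<orb_len a x0])"
  by (simp add: lam_def alpha_def)

lemma lam_mult:
  assumes "p \<in> A" "a0 \<in> CC A x0 p z" "set bs \<subseteq> B"
  shows "lam x0 (prod_right bs) a0 = prod_right (map (\<lambda>b. lam x0 b a0) bs)"
  using assms(3)
proof (induction bs)
  case Nil then show ?case by (simp only: prod_right.simps list.map lam_alpha alpha_id prod_right_ids)
next
  case (Cons b bs)
  let ?ks = "[1..<orb_len a0 x0]"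
  let ?y = "\<lambda>k. (a0 ^^ k) x0"
  have b: "b \<in> B" and f: "prod_right bs \<in> B" and bsB: "set bs \<subseteq> B" using Cons.prems prod_right_B by auto
  have yX: "\<And>k. k \<in> set ?ks \<Longrightarrow> ?y k \<in> XX A x0 p z" using orb_in_XX[OF assms(2)] by auto
  have "lam x0 (prod_right (b # bs)) a0 = prod_right (map (\<lambda>k. alpha (prod_right bs \<circ> b) (?y k)) ?ks)"
    by (simp add: lam_alpha)
  also have "\<dots> = prod_right (map (\<lambda>k. alpha (prod_right bs) (?y k) \<circ> alpha b (?y k)) ?ks)"
    by (rule arg_cong[where f = prod_right], rule map_cong[OF refl], rule alpha_comp[OF f b], rule XX_ne, erule yX)
  also have "\<dots> = prod_right (map (\<lambda>k. alpha (prod_right bs) (?y k)) ?ks) \<circ> prod_right (map (\<lambda>k. alpha b (?y k)) ?ks)"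
    apply (rule prod_right_split[OF comm_S'[OF assms(1), of z]])
    using yX f b unfolding CommS_def by blast
  also have "\<dots> = lam x0 (prod_right bs) a0 \<circ> lam x0 b a0" by (simp add: lam_alpha)
  also have "\<dots> = prod_right (map (\<lambda>b. lam x0 b a0) (b # bs))" using Cons.IH[OF bsB] by simp
  finally show ?case .
qed


lemma core_count:
  assumes vw: "valid w" and pdef: "p = rp w"
    and lmin: "\<And>k. 0 < k \<Longrightarrow> k < l \<Longrightarrow> (p ^^ k) z \<noteq> z" and lorb: "orb_len p z = l"
  defines "P \<equiv> pw w"
  defines "hit \<equiv> \<lambda>i. {j\<in>{..<l}. snd (P ! i) ((p ^^ j) z) = x0}"
  shows "mset (bl (secw x0 (wpow w l) z)) = (\<Sum>i<length P. \<Sum>j\<in>hit i. {#fst (P ! i)#})"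
    "\<And>i. i < length P \<Longrightarrow> card (hit i) \<le> 1"
proof -
  let ?n = "length P"
  let ?pj = "\<lambda>j. (p ^^ j) z"
  have h_eq: "secw x0 (wpow w l) z = concat (map (\<lambda>j. map (Fl x0 (?pj j)) P) [0..<l])"
    unfolding secw_wpow by (simp add: secw_pw P_def pdef)
  have "mset (bl (secw x0 (wpow w l) z)) = (\<Sum>j<l. mset (bl (map (Fl x0 (?pj j)) P)))"
    unfolding h_eq bl_concat map_map comp_def by (rule mset_concat_upt)
  also have "\<dots> = (\<Sum>j<l. \<Sum>i<?n. (if snd (P ! i) (?pj j) = x0 then {#fst (P ! i)#} else {#}))"
    by (rule sum.cong[OF refl]) (simp add: bl_map_Fl mset_concat_nth if_distrib[of mset] cong: if_cong)
  also have "\<dots> = (\<Sum>i<?n. \<Sum>j<l. (if snd (P ! i) (?pj j) = x0 then {#fst (P ! i)#} else {#}))"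
    by (rule sum.swap)
  also have "\<dots> = (\<Sum>i<?n. \<Sum>j\<in>hit i. {#fst (P ! i)#})"
    unfolding hit_def by (rule sum.cong[OF refl]) (rule sum.inter_filter[symmetric], simp)
  finally show "mset (bl (secw x0 (wpow w l) z)) = (\<Sum>i<length P. \<Sum>j\<in>hit i. {#fst (P ! i)#})" .
  fix i assume i: "i < ?n"
  have dA: "snd (P ! i) \<in> A" using pw_A[OF vw, of "P ! i"] i by (simp add: P_def)
  have pA: "p \<in> A" using rp_A[OF vw] pdef by simp
  have injd: "inj (snd (P ! i))" using A_bij[OF dA] bij_is_inj by blast
  have injp: "inj p" using A_bij[OF pA] bij_is_inj by blast
  have "\<forall>j1\<in>hit i. \<forall>j2\<in>hit i. j1 = j2"
  proof (intro ballI)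
    fix j1 j2 assume "j1 \<in> hit i" "j2 \<in> hit i"
    then have j: "j1 < l" "j2 < l" "snd (P ! i) (?pj j1) = snd (P ! i) (?pj j2)" unfolding hit_def by auto
    then have "?pj j1 = ?pj j2" using injd by (meson injD)
    then show "j1 = j2" using orb_distinct[OF injp, of j1 z j2] j lmin lorb by simp
  qed
  then show "card (hit i) \<le> 1" using card_le_Suc0_iff_eq[of "hit i"] unfolding hit_def by auto
qed


lemma core_rp:
  assumes vw: "valid w" and pdef: "p = rp w" and lpos: "0 < l" and lfix: "(p ^^ l) z = z"
    and lmin: "\<And>k. 0 < k \<Longrightarrow> k < l \<Longrightarrow> (p ^^ k) z \<noteq> z" and lorb: "orb_len p z = l"
  defines "P \<equiv> pw w"
  defines "hit \<equiv> \<lambda>i. {j\<in>{..<l}. snd (P ! i) ((p ^^ j) z) = x0}"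
  assumes allhit: "\<forall>i<length P. \<exists>j. hit i = {j}"
  shows "rp (secw x0 (wpow w l) z) = lamx x0 e (prod_right (bl w)) p z"
proof -
  let ?n = "length P"
  let ?pj = "\<lambda>j. (p ^^ j) z"
  define bb where "bb i = fst (P ! i)" for i
  define dd where "dd i = snd (P ! i)" for i
  have pA: "p \<in> A" using rp_A[OF vw] pdef by simp
  have bdA: "bb i \<in> B \<and> dd i \<in> A" if "i < ?n" for i
    using pw_A[OF vw, of "P ! i"] that by (simp add: P_def bb_def dd_def)
  from allhit have "\<forall>i. \<exists>j. i < ?n \<longrightarrow> hit i = {j}" by blast
  then obtain J where J: "\<And>i. i < ?n \<Longrightarrow> hit i = {J i}" by (metis choice)
  have Jl: "J i < l" and Jhit: "dd i (?pj (J i)) = x0" and Juniq: "\<And>j. j < l \<Longrightarrow> dd i (?pj j) = x0 \<Longrightarrow> j = J i"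
    if "i < ?n" for i
  proof -
    have "J i \<in> hit i" using J[OF that] by simp
    then show "J i < l" "dd i (?pj (J i)) = x0" unfolding hit_def dd_def by auto
    fix j assume "j < l" "dd i (?pj j) = x0"
    then have "j \<in> hit i" unfolding hit_def dd_def by auto
    then show "j = J i" using J[OF that] by simp
  qed
  define c where "c i = (p ^^ (l - J i)) \<circ> inv (dd i)" for i
  define a where "a i = conjg (c i) p" for i
  have cA: "c i \<in> A" and cbij: "bij (c i)" and cx0: "c i x0 = z" if "i < ?n" for i
  proof -
    have d: "dd i \<in> A" using bdA[OF that] by simp
    show "c i \<in> A" unfolding c_def by (rule A_comp[OF A_inv[OF d] A_pow[OF pA]])
    then show "bij (c i)" by (rule A_bij)
    have "inv (dd i) x0 = ?pj (J i)" using Jhit[OF that] A_bij[OF d] by (metis bij_inv_eq_iff)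
    then have "c i x0 = (p ^^ (l - J i)) ((p ^^ J i) z)" by (simp add: c_def)
    also have "\<dots> = (p ^^ (l - J i + J i)) z" by (simp add: funpow_add)
    also have "\<dots> = z" using Jl[OF that] lfix by simp
    finally show "c i x0 = z" .
  qed
  have aCC: "a i \<in> CC A x0 p z" if "i < ?n" for i
    unfolding CC_def mp_def a_def using cA[OF that] cx0[OF that] by blast
  have ainv: "inv (c i) z = x0" if "i < ?n" for i
    using cx0[OF that] cbij[OF that] by (metis bij_inv_eq_iff)
  have aorb: "orb_len (a i) x0 = l" if "i < ?n" for i
    using conj_orb_len[OF cbij[OF that], of p z] lorb ainv[OF that] by (simp add: a_def conjg_def)
  have apow: "(a i ^^ k) x0 = inv (c i) (?pj k)" if "i < ?n" for i k
    using conj_pow[OF cbij[OF that], where p = p and k = k] cx0[OF that] by (simp add: a_def conjg_def)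
  have F5: "inv (c i) (?pj k) = dd i (?pj ((k + J i) mod l))" if "i < ?n" "1 \<le> k" "k < l" for i k
  proof -
    let ?j = "(k + J i) mod l"
    have d: "dd i \<in> A" using bdA[OF that(1)] by simp
    have "c i (dd i (?pj ?j)) = (p ^^ (l - J i)) (?pj ?j)"
      using A_bij[OF d] by (simp add: c_def bij_is_inj)
    also have "\<dots> = (p ^^ (l - J i + ?j)) z" by (simp add: funpow_add)
    also have "\<dots> = (p ^^ ((l - J i + ?j) mod l)) z" by (rule powmod[OF lfix])
    also have "(l - J i + ?j) mod l = k" by (rule modarith3[OF Jl[OF that(1)] that(2,3)])
    finally have "c i (dd i (?pj ?j)) = ?pj k" .
    then show ?thesis using cbij[OF that(1)] by (metis bij_inv_eq_iff)
  qed
  define lamlist where "lamlist i = map (\<lambda>k. alpha (bb i) ((a i ^^ k) x0)) [1..<l]" for i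
  have KEY: "(\<Sum>j<l. (if dd i (?pj j) = x0 then {#} else {#alpha (bb i) (dd i (?pj j))#}))
      = mset (lamlist i)" if i: "i < ?n" for i
  proof -
    let ?f = "\<lambda>j. (if dd i (?pj j) = x0 then {#} else {#alpha (bb i) (dd i (?pj j))#})"
    have "(\<Sum>j<l. ?f j) = ?f (J i) + (\<Sum>j\<in>{..<l} - {J i}. ?f j)"
      by (rule sum.remove) (use Jl[OF i] in auto)
    also have "?f (J i) = {#}" using Jhit[OF i] by simp
    also have "(\<Sum>j\<in>{..<l} - {J i}. ?f j) = (\<Sum>j\<in>{..<l} - {J i}. {#alpha (bb i) (dd i (?pj j))#})"
    proof (rule sum.cong[OF refl])
      fix j assume "j \<in> {..<l} - {J i}"
      then have "dd i (?pj j) \<noteq> x0" using Juniq[OF i, of j] by auto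
      then show "?f j = {#alpha (bb i) (dd i (?pj j))#}" by simp
    qed
    also have "\<dots> = (\<Sum>k\<in>{1..<l}. {#alpha (bb i) (dd i (?pj ((k + J i) mod l)))#})"
    proof (rule sum.reindex_bij_witness[symmetric, where j = "\<lambda>k. (k + J i) mod l" and i = "\<lambda>j. (j + l - J i) mod l"])
      fix k assume "k \<in> {1..<l}"
      then show "((k + J i) mod l + l - J i) mod l = k" "(k + J i) mod l \<in> {..<l} - {J i}"
        using modarith1[OF Jl[OF i], of k] by auto
    next
      fix j assume "j \<in> {..<l} - {J i}"
      then show "((j + l - J i) mod l + J i) mod l = j" "(j + l - J i) mod l \<in> {1..<l}"
        using modarith2[OF Jl[OF i], of j] by auto
    qed simp
    also have "\<dots> = (\<Sum>k\<in>{1..<l}. {#alpha (bb i) ((a i ^^ k) x0)#})"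
      by (rule sum.cong[OF refl]) (simp add: apow[OF i] F5[OF i])
    also have "\<dots> = mset (lamlist i)" by (simp only: lamlist_def mset_map_upt)
    finally show ?thesis by simp
  qed
  define h where "h = secw x0 (wpow w l) z"
  have h_eq: "h = concat (map (\<lambda>j. map (Fl x0 (?pj j)) P) [0..<l])"
    unfolding h_def secw_wpow by (simp add: secw_pw P_def pdef)
  have "mset (al h) = (\<Sum>j<l. mset (al (map (Fl x0 (?pj j)) P)))"
    unfolding h_eq al_concat map_map comp_def by (rule mset_concat_upt)
  also have "\<dots> = (\<Sum>j<l. \<Sum>i<?n. (if dd i (?pj j) = x0 then {#} else {#alpha (bb i) (dd i (?pj j))#}))"
    by (rule sum.cong[OF refl]) (simp add: al_map_Fl mset_concat_nth if_distrib[of mset] bb_def dd_def cong: if_cong)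
  also have "\<dots> = (\<Sum>i<?n. \<Sum>j<l. (if dd i (?pj j) = x0 then {#} else {#alpha (bb i) (dd i (?pj j))#}))"
    by (rule sum.swap)
  also have "\<dots> = (\<Sum>i<?n. mset (lamlist i))"
    by (rule sum.cong[OF refl]) (simp add: KEY)
  also have "\<dots> = mset (concat (map lamlist [0..<?n]))"
    by (rule mset_concat_upt[symmetric])
  finally have al_eq: "mset (al h) = mset (concat (map lamlist [0..<?n]))" .
  have setal: "set (al h) \<subseteq> CommS p z"
  proof
    fix x assume "x \<in> set (al h)"
    then have "x \<in> set (concat (map lamlist [0..<?n]))" using al_eq by (metis set_mset_mset)
    then obtain i k where ik: "i < ?n" "1 \<le> k" "k < l" "x = alpha (bb i) ((a i ^^ k) x0)"
      by (auto simp: lamlist_def)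
    have "(a i ^^ k) x0 \<in> XX A x0 p z" using orb_in_XX[OF aCC[OF ik(1)], of k] aorb[OF ik(1)] ik by simp
    then show "x \<in> CommS p z" unfolding CommS_def using ik(4) bdA[OF ik(1)] by blast
  qed
  define a0 where "a0 = conjg (e z) p"
  have a0CC: "a0 \<in> CC A x0 p z" using e_mp unfolding a0_def CC_def by blast
  have "rp h = prod_right (al h)" by (rule rp_al)
  also have "\<dots> = prod_right (concat (map lamlist [0..<?n]))"
    by (rule prod_right_mset[OF comm_S'[OF pA] setal al_eq])
  also have "\<dots> = prod_right (map (\<lambda>i. prod_right (lamlist i)) [0..<?n])"
    by (simp add: prod_right_concat comp_def)
  also have "\<dots> = prod_right (map (\<lambda>i. lam x0 (bb i) a0) [0..<?n])"
  proof (rule arg_cong[where f = prod_right], rule map_cong[OF refl])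
    fix i assume "i \<in> set [0..<?n]"
    then have i: "i < ?n" by simp
    have "prod_right (lamlist i) = lam x0 (bb i) (a i)" by (simp add: lamlist_def lam_alpha aorb[OF i])
    also have "\<dots> = lam x0 (bb i) a0"
      using stab bdA[OF i] pA aCC[OF i] a0CC unfolding stable_def by blast
    finally show "prod_right (lamlist i) = lam x0 (bb i) a0" .
  qed
  also have "\<dots> = prod_right (map (\<lambda>b. lam x0 b a0) (map bb [0..<?n]))" by (simp add: comp_def)
  also have "\<dots> = lam x0 (prod_right (map bb [0..<?n])) a0"
  proof -
    have "set (map bb [0..<?n]) \<subseteq> B"
    proof
      fix x assume "x \<in> set (map bb [0..<?n])"
      then obtain i where "i < ?n" "x = bb i" by auto
      then show "x \<in> B" using bdA by blast
    qed
    then show ?thesis by (rule lam_mult[OF pA a0CC, symmetric])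
  qed
  also have "map bb [0..<?n] = bl w"
    unfolding bl_pw P_def[symmetric] by (rule nth_equalityI) (simp_all add: bb_def)
  finally show ?thesis unfolding h_def lamx_def a0_def .
qed


lemma ordz:
  assumes vw: "valid w"
    and IHo: "\<And>u. valid u \<Longrightarrow> length (bl u) < length (bl w) \<Longrightarrow> \<exists>N>0. ev u ^^ N = id"
    and IHk: "\<And>u. valid u \<Longrightarrow> length (bl u) = length (bl w) \<Longrightarrow> prod_right (bl u) = prod_right (bl w)
       \<Longrightarrow> rp u \<in> Lam x0 e (prod_right (bl w)) {rp w} \<Longrightarrow> rp w \<noteq> id \<Longrightarrow> \<exists>N>0. ev u ^^ N = id"
    and pdef: "p = rp w" and m: "0 < m" "p ^^ m = id"
  shows "\<exists>r>0. ev (secw x0 (wpow w (orb_len p z)) z) ^^ r = id"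
proof -
  define l where "l = orb_len p z"
  define h where "h = secw x0 (wpow w l) z"
  define P where "P = pw w"
  define hit where "hit i = {j\<in>{..<l}. snd (P ! i) ((p ^^ j) z) = x0}" for i
  have pmz: "(p ^^ m) z = z" using m by simp
  note LP = orb_len_props[OF pmz m(1)]
  have lpos: "0 < l" and lfix: "(p ^^ l) z = z" and lmin: "\<And>k. 0 < k \<Longrightarrow> k < l \<Longrightarrow> (p ^^ k) z \<noteq> z"
    using LP unfolding l_def by auto
  have lorb: "orb_len p z = l" by (simp add: l_def)
  have vh: "valid h" unfolding h_def by (intro valid_secw valid_wpow vw)
  have hitdef: "hit = (\<lambda>i. {j\<in>{..<l}. snd (P ! i) ((p ^^ j) z) = x0})" by (simp add: hit_def fun_eq_iff)
  note CC = core_count[OF vw pdef lmin lorb, folded P_def hitdef h_def]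
  have lenw: "length (bl w) = length P" by (simp add: bl_pw P_def)
  have len: "length (bl h) = (\<Sum>i<length P. card (hit i))"
  proof -
    have "length (bl h) = size (mset (bl h))" by simp
    also have "\<dots> = (\<Sum>i<length P. card (hit i))" using CC(1) by (simp add: hit_def)
    finally show ?thesis .
  qed
  have le: "length (bl h) \<le> length (bl w)"
  proof -
    have "(\<Sum>i<length P. card (hit i)) \<le> (\<Sum>i<length P. 1)" by (rule sum_mono) (use CC(2) in \<open>auto simp: hit_def\<close>)
    then show ?thesis using len lenw by simp
  qed
  show ?thesis
  proof (cases "length (bl h) < length (bl w)")
    case True then show ?thesis using IHo[OF vh] unfolding h_def l_def by blast
  next
    case False
    then have eq: "(\<Sum>i<length P. card (hit i)) = card {..<length P}" using le len lenw by simp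
    have c1: "card (hit i) = 1" if "i < length P" for i
      by (rule sum_le1_eq[OF _ _ eq]) (use CC(2) that in \<open>auto simp: hit_def\<close>)
    have allhit: "\<forall>i<length P. \<exists>j. hit i = {j}" using c1 by (metis card_1_singletonE)
    show ?thesis
    proof (cases "l = 1")
      case True
      have "\<forall>q\<in>set P. snd q z = x0"
      proof
        fix q assume "q \<in> set P"
        then obtain i where i: "i < length P" "q = P ! i" by (metis in_set_conv_nth)
        obtain j where "hit i = {j}" using allhit i(1) by blast
        then have "j \<in> hit i" by simp
        then have "j = 0" "snd (P ! i) ((p ^^ j) z) = x0" unfolding hit_def using True by auto
        then show "snd q z = x0" using i by simp
      qed
      then have "al h = []" unfolding h_def True wpow_1 P_def One_nat_def by (rule al_secw_allhit)
      then have "ev h = prod_right (bl h)" by (rule ev_allB)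
      moreover have "prod_right (bl h) \<in> B" by (rule prod_right_B[OF bl_B[OF vh]])
      ultimately show ?thesis using B_per unfolding periodic_def h_def l_def by auto
    next
      case False
      then have l2: "1 < l" using lpos by simp
      have "(p ^^ 1) z \<noteq> z" using lmin[of 1] l2 by simp
      then have pnid: "rp w \<noteq> id" using pdef by auto
      have rph: "rp h = lamx x0 e (prod_right (bl w)) p z"
        unfolding h_def
        apply (rule core_rp[OF vw pdef lpos lfix _ lorb])
        using lmin apply blast
        using allhit unfolding hit_def P_def by blast
      have "rp h \<in> Lam x0 e (prod_right (bl w)) {rp w}" unfolding Lam_def rph pdef by blast
      obtain J where J: "\<And>i. i < length P \<Longrightarrow> hit i = {J i}" using allhit by metis
      have "mset (bl h) = (\<Sum>i<length P. \<Sum>j\<in>hit i. {#fst (P ! i)#})" using CC(1) by (simp add: hit_def)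
      also have "\<dots> = (\<Sum>i<length P. {#fst (P ! i)#})" by (rule sum.cong[OF refl]) (simp add: J)
      also have "\<dots> = mset (map (\<lambda>i. fst (P ! i)) [0..<length P])"
        by (simp only: mset_map_upt atLeast0LessThan)
      also have "\<dots> = mset (bl w)" by (simp add: map_nth_fst bl_pw P_def)
      finally have mseq: "mset (bl h) = mset (bl w)" .
      then have "length (bl h) = length (bl w)" by (metis size_mset)
      moreover have "prod_right (bl h) = prod_right (bl w)"
        by (rule prod_right_mset[OF _ bl_B[OF vh] mseq]) (use B_ab in \<open>auto simp: abelian_def\<close>)
      ultimately show ?thesis using IHk[OF vh] \<open>rp h \<in> _\<close> pnid unfolding h_def l_def by blast
    qed
  qed
qed


lemma step:
  assumes vw: "valid w"
    and IHo: "\<And>u. valid u \<Longrightarrow> length (bl u) < length (bl w) \<Longrightarrow> \<exists>N>0. ev u ^^ N = id"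
    and IHk: "\<And>u. valid u \<Longrightarrow> length (bl u) = length (bl w) \<Longrightarrow> prod_right (bl u) = prod_right (bl w)
       \<Longrightarrow> rp u \<in> Lam x0 e (prod_right (bl w)) {rp w} \<Longrightarrow> rp w \<noteq> id \<Longrightarrow> \<exists>N>0. ev u ^^ N = id"
  shows "\<exists>N>0. ev w ^^ N = id"
proof -
  define p where "p = rp w"
  have pA: "p \<in> A" using rp_A[OF vw] by (simp add: p_def)
  have injp: "inj p" using A_bij[OF pA] bij_is_inj by blast
  obtain m where m: "0 < m" "p ^^ m = id" using A_per pA unfolding periodic_def by blast
  have pmz: "(p ^^ m) z = z" for z using m by simp
  define P where "P = pw w"
  define hz where "hz z = secw x0 (wpow w (orb_len p z)) z" for z
  have vhz: "valid (hz z)" for z unfolding hz_def by (intro valid_secw valid_wpow vw)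
  have "\<forall>z. \<exists>r>0. ev (hz z) ^^ r = id" using ordz[OF vw IHo IHk p_def m] unfolding hz_def by blast
  then obtain r where r: "\<And>z. r z > 0" "\<And>z. ev (hz z) ^^ r z = id" by metis
  have Lm: "orb_len p z \<le> m" for z using orb_len_props(3)[OF pmz m(1)] .
  have PA: "fst (P ! i) \<in> B \<and> snd (P ! i) \<in> A" if "i < length P" for i
    using pw_A[OF vw, of "P ! i"] that by (simp add: P_def)
  have injc: "inj (\<lambda>z. snd (P ! i) ((p ^^ j) z))" if "i < length P" for i j
  proof -
    have "inj (snd (P ! i))" using PA[OF that] A_bij bij_is_inj by blast
    moreover have "inj (p ^^ j)" using injp by (rule inj_fn)
    ultimately show ?thesis using inj_compose[of "snd (P ! i)" "p ^^ j"] by (simp add: comp_def)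
  qed
  define F0 where "F0 = (\<Union>i<length P. \<Union>j<m. (\<lambda>z. snd (P ! i) ((p ^^ j) z)) -` {x0})"
  have fF0: "finite F0" unfolding F0_def
    by (intro finite_UN_I finite_lessThan finite_vimageI finite.intros injc) auto
  have blnil: "bl (hz z) = []" if "z \<notin> F0" for z
  proof (rule ccontr)
    assume "bl (hz z) \<noteq> []"
    then obtain x where "x \<in> set (bl (hz z))" by (meson list.set_sel(1))
    then have "\<exists>q\<in>set (pw w). \<exists>j<orb_len p z. snd q ((rp w ^^ j) z) = x0"
      unfolding hz_def by (rule set_bl_secw)
    then obtain q j where q: "q \<in> set (pw w)" "j < orb_len p z" "snd q ((rp w ^^ j) z) = x0"
      by blast
    then obtain i where i: "i < length P" "q = P ! i" unfolding P_def by (metis in_set_conv_nth)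
    have "j < m" using q(2) Lm[of z] by simp
    then have "z \<in> F0" unfolding F0_def using i q(3) by (auto simp: p_def)
    then show False using that by blast
  qed
  have unif: "\<exists>E>0. \<exists>F. finite F \<and> (\<forall>z. z \<notin> F \<longrightarrow> ev (hz z) ^^ E = id)"
  proof (cases "finite_exponent A")
    case True
    then obtain E where E: "0 < E" "\<forall>g\<in>A. g ^^ E = id" unfolding finite_exponent_def by blast
    have "ev (hz z) ^^ E = id" if "z \<notin> F0" for z
    proof -
      have "ev (hz z) = rooted (rp (hz z))" by (rule ev_allA[OF blnil[OF that]])
      then have "ev (hz z) ^^ E = rooted (rp (hz z) ^^ E)" by (simp add: rooted_pow)
      also have "rp (hz z) ^^ E = id" using E(2) rp_A[OF vhz] by blast
      finally show ?thesis by (simp only: rooted_id)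
    qed
    then show ?thesis using E(1) fF0 by blast
  next
    case False
    then have fs: "finite_support x0 B" using fin by blast
    define F1 where "F1 = (\<Union>i<length P. \<Union>j<m. (\<lambda>z. snd (P ! i) ((p ^^ j) z)) -` {y. y \<noteq> x0 \<and> sect (fst (P ! i)) [y] \<noteq> id})"
    have fF1: "finite F1" unfolding F1_def
    proof (intro finite_UN_I finite_lessThan finite_vimageI injc)
      fix i j assume "i \<in> {..<length P}"
      then show "finite {y. y \<noteq> x0 \<and> sect (fst (P ! i)) [y] \<noteq> id}"
        using fs PA unfolding finite_support_def by auto
    qed auto
    have "ev (hz z) ^^ 1 = id" if "z \<notin> F0 \<union> F1" for z
    proof -
      have "set (al (hz z)) \<subseteq> {id}"
      proof
        fix x assume "x \<in> set (al (hz z))"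
        then have "\<exists>q\<in>set (pw w). \<exists>j<orb_len p z. snd q ((rp w ^^ j) z) \<noteq> x0 \<and> x = alpha (fst q) (snd q ((rp w ^^ j) z))"
          unfolding hz_def by (rule set_al_secw)
        then obtain q j where q: "q \<in> set (pw w)" "j < orb_len p z" "snd q ((rp w ^^ j) z) \<noteq> x0"
          "x = alpha (fst q) (snd q ((rp w ^^ j) z))"
          by blast
        then obtain i where i: "i < length P" "q = P ! i" unfolding P_def by (metis in_set_conv_nth)
        have "j < m" using q(2) Lm[of z] by simp
        then have "sect (fst q) [snd q ((rp w ^^ j) z)] = id"
          using that q(3) i unfolding F1_def p_def by auto
        then show "x \<in> {id}" using q(4) by (simp add: alpha_def)
      qed
      then have "rp (hz z) = id" by (simp add: rp_al prod_right_all_id)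
      then have "ev (hz z) = id" using ev_allA[OF blnil] that by simp
      then show ?thesis by simp
    qed
    then show ?thesis using fF0 fF1 by blast
  qed
  then obtain E F where EF: "0 < E" "finite F" "\<And>z. z \<notin> F \<Longrightarrow> ev (hz z) ^^ E = id" by blast
  define N where "N = E * (\<Prod>z\<in>F. r z)"
  have Npos: "0 < N" unfolding N_def using EF(1) r(1) by (simp add: prod_pos)
  have hN: "ev (hz z) ^^ N = id" for z
  proof (cases "z \<in> F")
    case True
    have "r z dvd N" unfolding N_def using dvd_prodI[OF EF(2) True, of r] by simp
    then show ?thesis using funpow_dvd_id r(2) by blast
  next
    case False
    then show ?thesis using funpow_dvd_id[OF EF(3)[OF False]] by (simp add: N_def)
  qed
  define u where "u = wpow w m"
  have vu: "valid u" unfolding u_def by (rule valid_wpow[OF vw])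
  have rpu: "rp u = id" unfolding u_def rp_wpow using m p_def by simp
  have secu: "ev (secw x0 u z) ^^ N = id" for z
  proof -
    let ?l = "orb_len p z"
    have "?l dvd m" by (rule orb_len_dvd[OF pmz m(1)])
    then obtain q where q: "m = ?l * q" by (auto simp: dvd_def)
    have fx: "rp (wpow w ?l) z = z" unfolding rp_wpow p_def[symmetric] using orb_len_props(2)[OF pmz m(1)] .
    have "secw x0 u z = wpow (hz z) q"
      unfolding u_def q wpow_mult hz_def by (rule secw_wpow_fix[OF fx])
    then have "ev (secw x0 u z) = ev (hz z) ^^ q" by (simp add: ev_wpow)
    then have "ev (secw x0 u z) ^^ N = (ev (hz z) ^^ N) ^^ q" by (simp add: funpow_mult mult.commute)
    also have "\<dots> = id"
    proof -
      have idq: "(id::'x list \<Rightarrow> 'x list) ^^ k = id" for k by (induction k) simp_all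
      show ?thesis using hN[of z] idq by simp
    qed
    finally show ?thesis .
  qed
  have evu: "ev u ^^ N = id"
  proof (rule ext)
    fix xs show "(ev u ^^ N) xs = id xs"
    proof (cases xs)
      case Nil
      have "(ev u ^^ k) [] = []" for k by (induction k) (simp_all add: ev_nil[OF vu])
      then show ?thesis using Nil by simp
    next
      case (Cons z v)
      have "(ev u ^^ N) (z # v) = z # (ev (secw x0 u z) ^^ N) v"
        by (rule funpow_cons) (simp add: ev_cons[OF vu] rpu)
      then show ?thesis using Cons secu by simp
    qed
  qed
  have "ev w ^^ (m * N) = id" using evu by (simp add: u_def ev_wpow funpow_mult)
  moreover have "0 < m * N" using m(1) Npos by simp
  ultimately show ?thesis by blast
qed


lemma Lam_mono: "P \<subseteq> Q \<Longrightarrow> Lam x0 e b P \<subseteq> Lam x0 e b Q"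
  unfolding Lam_def by blast

lemma Lam_pow_mono: "P \<subseteq> Q \<Longrightarrow> (Lam x0 e b ^^ k) P \<subseteq> (Lam x0 e b ^^ k) Q"
  by (induction k) (simp_all add: Lam_mono)

lemma main: "valid w \<Longrightarrow> \<exists>N>0. ev w ^^ N = id"
proof (induction "length (bl w)" arbitrary: w rule: less_induct)
  case less
  have IHo: "\<And>u. valid u \<Longrightarrow> length (bl u) < length (bl w) \<Longrightarrow> \<exists>N>0. ev u ^^ N = id"
    using less.hyps by blast
  have inner: "\<And>u. valid u \<Longrightarrow> length (bl u) = length (bl w) \<Longrightarrow>
      (Lam x0 e (prod_right (bl u)) ^^ k) {rp u} \<subseteq> {id} \<Longrightarrow> \<exists>N>0. ev u ^^ N = id" for k
  proof (induction k)
    case 0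
    fix u assume u: "valid u" "length (bl u) = length (bl w)"
      "(Lam x0 e (prod_right (bl u)) ^^ 0) {rp u} \<subseteq> {id}"
    have rid: "rp u = id" using u(3) by simp
    show "\<exists>N>0. ev u ^^ N = id"
      by (rule step[OF u(1)]) (use IHo u(2) rid in auto)
  next
    case (Suc k)
    fix u assume u: "valid u" "length (bl u) = length (bl w)"
      "(Lam x0 e (prod_right (bl u)) ^^ Suc k) {rp u} \<subseteq> {id}"
    show "\<exists>N>0. ev u ^^ N = id"
    proof (rule step[OF u(1)])
      fix v assume "valid v" "length (bl v) < length (bl u)"
      then show "\<exists>N>0. ev v ^^ N = id" using IHo u(2) by simp
    next
      fix v assume v: "valid v" "length (bl v) = length (bl u)" "prod_right (bl v) = prod_right (bl u)"
        "rp v \<in> Lam x0 e (prod_right (bl u)) {rp u}"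
      let ?L = "Lam x0 e (prod_right (bl u))"
      have "(?L ^^ k) {rp v} \<subseteq> (?L ^^ k) (?L {rp u})" using v(4) by (intro Lam_pow_mono) simp
      also have "\<dots> = (?L ^^ Suc k) {rp u}" by (simp add: funpow_Suc_right del: funpow.simps)
      also have "\<dots> \<subseteq> {id}" by (rule u(3))
      finally have "(Lam x0 e (prod_right (bl v)) ^^ k) {rp v} \<subseteq> {id}" using v(3) by simp
      then show "\<exists>N>0. ev v ^^ N = id" using Suc.IH[of v] v(1,2) u(2) unfolding id_def by simp
    qed
  qed
  have bB: "prod_right (bl w) \<in> B" by (rule prod_right_B[OF bl_B[OF less.prems]])
  have rA: "rp w \<in> A" by (rule rp_A[OF less.prems])
  obtain n where "\<forall>m>n. (Lam x0 e (prod_right (bl w)) ^^ m) {rp w} \<subseteq> {id}"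
    using evt bB rA unfolding eventually_trivial_def by blast
  then have "(Lam x0 e (prod_right (bl w)) ^^ Suc n) {rp w} \<subseteq> {id}" by blast
  then show ?case using inner less.prems by blast
qed

lemma G_words: "g \<in> gen_grp (rooted ` A \<union> B) \<Longrightarrow> \<exists>w. valid w \<and> g = ev w"
proof (induction rule: gen_grp.induct)
  case gen_id
  then show ?case by (rule exI[of _ "[]"]) simp
next
  case (gen_gen s)
  then show ?case
  proof
    assume "s \<in> rooted ` A"
    then obtain a where "a \<in> A" "s = rooted a" by blast
    then show ?thesis by (intro exI[of _ "[Inl a]"]) simp
  next
    assume "s \<in> B"
    then show ?thesis by (intro exI[of _ "[Inr s]"]) simp
  qed
next
  case (gen_inv s)
  then show ?case
  proof
    assume "s \<in> rooted ` A"
    then obtain a where a: "a \<in> A" "s = rooted a" by blast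
    have ba: "bij a" by (rule A_bij[OF a(1)])
    have "a \<circ> inv a = id" using bij_is_surj[OF ba] surj_iff by blast
    moreover have "inv a \<circ> a = id" using bij_is_inj[OF ba] inj_iff by blast
    ultimately have "rooted a \<circ> rooted (inv a) = id" "rooted (inv a) \<circ> rooted a = id"
      by (simp_all add: rooted_comp[symmetric])
    then have "inv (rooted a) = rooted (inv a)" by (rule inv_unique_comp)
    then show ?thesis using a A_inv[OF a(1)] by (intro exI[of _ "[Inl (inv a)]"]) simp
  next
    assume "s \<in> B"
    then show ?thesis using B_inv by (intro exI[of _ "[Inr (inv s)]"]) simp
  qed
next
  case (gen_mult g h)
  then obtain wg wh where "valid wg" "g = ev wg" "valid wh" "h = ev wh" by blast
  then show ?case by (intro exI[of _ "wg @ wh"]) (simp add: ev_append)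
qed

lemma periodic_G: "periodic (CS_group A B)"
  unfolding periodic_def CS_group_def
proof
  fix g assume "g \<in> gen_grp (rooted ` A \<union> B)"
  then obtain w where "valid w" "g = ev w" using G_words by blast
  then show "\<exists>n>0. g ^^ n = id" using main by blast
qed

end

theorem theoremA:
  fixes x0 :: 'x
    and A :: "('x \<Rightarrow> 'x) set"
    and B :: "('x list \<Rightarrow> 'x list) set"
    and e :: "'x \<Rightarrow> ('x \<Rightarrow> 'x)"
  assumes CS: "CS_data x0 A B"
    and e_mp: "\<forall>x. e x \<in> mp A x0 x"
    and e_0: "e x0 = id"
    and stab: "stable x0 A B"
    and soa: "strongly_orbitwise_abelian x0 A B"
    and A_per: "periodic A"
    and fin: "finite_exponent A \<or> finite_support x0 B"
    and B_ab: "abelian B"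
    and B_per: "periodic B"
    and ev: "\<forall>b\<in>B. eventually_trivial A (Lam x0 e b)"
  shows "periodic (CS_group A B)"
proof -
  interpret CSL x0 A B e using assms by (unfold_locales) auto
  show ?thesis by (rule periodic_G)
qed

end
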